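(* Let $p\in(0,1)$. Let $B_p(x)=\sum_{n\ge0}(1-p)^{\binom{n+1}{2}}x^n$, and let $h_m=[x^m]\,\frac{1}{B_p(x)}$ denote the coefficient of $x^m$ in the power series $1/B_p(x)$. (a) For every $n\ge1$, \[ h_n=\sum_{j=1}^{n}(-1)^j\sum_{\mathbf a\in\mathcal C_{n,j}}(1-p)^{\sum_{i=1}^j\binom{a_i+1}{2}}. \] (b) For $n\ge1$, let $X_n$ be the maximum weight of a directed path from $1$ to $n$ in the transitive tournament on $\{1,\ldots,n\}$ with independent $\mathrm{Bernoulli}(p)$ edge weights, and let $g(n)=1+\mathbb{E}[X_n]$. Then \[ g(n)=\sum_{m=0}^{n-1}(n-m)h_m=\sum_{m=0}^{n-1}(n-m)\sum_{\mathbf a\in\mathcal C_m}(-1)^{l(\mathbf a)}(1-p)^{\sum_{i=1}^{l(\mathbf a)}\binom{a_i+1}{2}}, \] and \[ g(n)=\sum_{m=0}^{n-1}\sum_{j=0}^{m}\sum_{k=0}^{j}(-1)^k\sum_{\mathbf a\in\mathcal C_{j,k}}(1-p)^{\sum_{i=1}^k\binom{a_i+1}{2}}. \]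
   Context: For integers $n\ge0$ and $i\ge0$, an $i$-composition of $n$ is a tuple $\mathbf a=(a_1,\ldots,a_i)$ of positive integers with $a_1+\cdots+a_i=n$. The set of all $i$-compositions of $n$ is $\mathcal C_{n,i}$. For $n\ge1$, $\mathcal C_n=\bigcup_{i=1}^n\mathcal C_{n,i}$ is the set of all compositions of $n$. Convention: $\mathcal C_{0,0}=\mathcal C_0$ consists of the single empty composition, of length $0$, with empty exponent sum $0$ (so it contributes $1$); for $j\ge1$, $\mathcal C_{j,0}=\emptyset$. The length of $\mathbf a\in\mathcal C_{n,i}$ is $l(\mathbf a)=i$. The transitive tournament on $\{1,\ldots,n\}$ has a directed edge $(i,j)$ for each $1\le i<j\le n$. Its edges carry independent weights in $\{0,1\}$, each equal to $1$ with probability $p$. $X_n$ is the maximum, over directed paths from $1$ to $n$, of the sum of the edge weights along the path. *)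

theory Defs
  imports "HOL-Probability.Probability" "HOL-Computational_Algebra.Formal_Power_Series"
begin

definition comps :: "nat \<Rightarrow> nat \<Rightarrow> nat list set" where
  "comps n i = {as. length as = i \<and> (\<forall>a\<in>set as. 0 < a) \<and> sum_list as = n}"

definition all_comps :: "nat \<Rightarrow> nat list set" where
  "all_comps n = {as. (\<forall>a\<in>set as. 0 < a) \<and> sum_list as = n}"

definition comp_weight :: "real \<Rightarrow> nat list \<Rightarrow> real" where
  "comp_weight p as = (1 - p) ^ (\<Sum>i<length as. (as ! i + 1) choose 2)"

definition Bp :: "real \<Rightarrow> real fps" where
  "Bp p = Abs_fps (\<lambda>n. (1 - p) ^ ((n + 1) choose 2))"

definition hcoef :: "real \<Rightarrow> nat \<Rightarrow> real" where
  "hcoef p m = fps_nth (inverse (Bp p)) m"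

definition tt_edges :: "nat \<Rightarrow> (nat \<times> nat) set" where
  "tt_edges n = {(i, j). 1 \<le> i \<and> i < j \<and> j \<le> n}"

definition tt_paths :: "nat \<Rightarrow> nat list set" where
  "tt_paths n = {vs. vs \<noteq> [] \<and> hd vs = 1 \<and> last vs = n \<and> sorted_wrt (<) vs \<and> set vs \<subseteq> {1..n}}"

definition path_weight :: "(nat \<times> nat \<Rightarrow> bool) \<Rightarrow> nat list \<Rightarrow> nat" where
  "path_weight w vs = sum_list (map (\<lambda>e. if w e then 1 else 0) (zip vs (tl vs)))"

definition Xn :: "nat \<Rightarrow> (nat \<times> nat \<Rightarrow> bool) \<Rightarrow> nat" where
  "Xn n w = Max (path_weight w ` tt_paths n)"

text \<open>Independent Bernoulli(p) weights on the edges (True = weight 1).\<close>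
definition weight_pmf :: "real \<Rightarrow> nat \<Rightarrow> (nat \<times> nat \<Rightarrow> bool) pmf" where
  "weight_pmf p n = Pi_pmf (tt_edges n) False (\<lambda>_. bernoulli_pmf p)"

definition gfun :: "real \<Rightarrow> nat \<Rightarrow> real" where
  "gfun p n = 1 + measure_pmf.expectation (weight_pmf p n) (\<lambda>w. real (Xn n w))"

end

theory Submission
  imports Defs
begin


lemma pw_Nil[simp]: "path_weight w [] = 0" by (simp add: path_weight_def)
lemma pw_single[simp]: "path_weight w [x] = 0" by (simp add: path_weight_def)
lemma pw_Cons2[simp]: "path_weight w (x # y # r) = (if w (x,y) then 1 else 0) + path_weight w (y # r)"
  by (simp add: path_weight_def)

lemma pw_snoc: "ys \<noteq> [] \<Longrightarrow> path_weight w (ys @ [j]) = path_weight w ys + (if w (last ys, j) then 1 else 0)"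
proof (induction ys)
  case Nil then show ?case by simp
next
  case (Cons a ys)
  then show ?case by (cases ys) auto
qed

lemma sorted_last_max: "sorted_wrt (<) (ys::nat list) \<Longrightarrow> ys \<noteq> [] \<Longrightarrow> x \<in> set ys \<Longrightarrow> x \<le> last ys"
proof (induction ys)
  case Nil then show ?case by simp
next
  case (Cons a ys)
  then show ?case using last_in_set[of ys] by (cases ys) fastforce+
qed

lemma tt_paths_finite: "finite (tt_paths n)"
proof -
  have "tt_paths n \<subseteq> {xs. set xs \<subseteq> {1..n} \<and> length xs \<le> n}"
  proof
    fix vs assume "vs \<in> tt_paths n"
    then have d: "distinct vs" and s: "set vs \<subseteq> {1..n}"
      by (auto simp: tt_paths_def strict_sorted_iff)
    have "length vs = card (set vs)" using d by (simp add: distinct_card)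
    also have "\<dots> \<le> card {1..n}" using s by (intro card_mono) auto
    finally show "vs \<in> {xs. set xs \<subseteq> {1..n} \<and> length xs \<le> n}" using s by simp
  qed
  moreover have "finite {xs. set xs \<subseteq> {1..n} \<and> length xs \<le> n}"
    by (rule finite_lists_length_le) simp
  ultimately show ?thesis by (rule finite_subset)
qed

lemma tt_paths_snoc:
  assumes "1 \<le> k"
  shows "vs \<in> tt_paths (Suc k) \<longleftrightarrow> (\<exists>i ys. 1 \<le> i \<and> i \<le> k \<and> ys \<in> tt_paths i \<and> vs = ys @ [Suc k])"
proof
  assume vs: "vs \<in> tt_paths (Suc k)"
  then have ne: "vs \<noteq> []" and h: "hd vs = 1" and l: "last vs = Suc k" and so: "sorted_wrt (<) vs"
    and st: "set vs \<subseteq> {1..Suc k}" by (auto simp: tt_paths_def)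
  define ys where "ys = butlast vs"
  have vsd: "vs = ys @ [Suc k]" using ne l unfolding ys_def by (metis append_butlast_last_id)
  have yne: "ys \<noteq> []" using h vsd assms by (cases ys) auto
  have hy: "hd ys = 1" using h vsd yne by simp
  have soy: "sorted_wrt (<) ys" and lt: "\<forall>x\<in>set ys. x < Suc k" using so vsd by (auto simp: sorted_wrt_append)
  define i where "i = last ys"
  have iin: "i \<in> set ys" using yne i_def by simp
  have i1: "1 \<le> i" using st vsd iin by auto
  have ik: "i \<le> k" using lt iin by auto
  have "set ys \<subseteq> {1..i}" using sorted_last_max[OF soy yne] st vsd i_def by auto
  then have "ys \<in> tt_paths i" using yne hy soy i_def by (simp add: tt_paths_def)
  then show "\<exists>i ys. 1 \<le> i \<and> i \<le> k \<and> ys \<in> tt_paths i \<and> vs = ys @ [Suc k]"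
    using i1 ik vsd by blast
next
  assume "\<exists>i ys. 1 \<le> i \<and> i \<le> k \<and> ys \<in> tt_paths i \<and> vs = ys @ [Suc k]"
  then obtain i ys where i: "1 \<le> i" "i \<le> k" and ys: "ys \<in> tt_paths i" and vs: "vs = ys @ [Suc k]" by blast
  from ys have ne: "ys \<noteq> []" and h: "hd ys = 1" and l: "last ys = i" and so: "sorted_wrt (<) ys"
    and st: "set ys \<subseteq> {1..i}" by (auto simp: tt_paths_def)
  show "vs \<in> tt_paths (Suc k)" unfolding vs tt_paths_def using ne h so st i
    by (auto simp: sorted_wrt_append)
qed

lemma tt_paths_1: "tt_paths 1 = {[1]}"
proof -
  have "vs = [1]" if "vs \<in> tt_paths 1" for vs
  proof -
    from that have ne: "vs \<noteq> []" and h: "hd vs = 1" and so: "sorted_wrt (<) vs" and st: "set vs \<subseteq> {1..1}"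
      by (auto simp: tt_paths_def)
    then obtain a r where vs: "vs = a # r" by (cases vs) auto
    have "r = []"
    proof (rule ccontr)
      assume "r \<noteq> []"
      then obtain b r' where "r = b # r'" by (cases r) auto
      then show False using so st vs by auto
    qed
    then show ?thesis using vs h by simp
  qed
  moreover have "[1] \<in> tt_paths 1" by (simp add: tt_paths_def)
  ultimately show ?thesis by blast
qed

lemma tt_paths_ne: "1 \<le> k \<Longrightarrow> tt_paths k \<noteq> {}"
proof (induction k rule: nat_induct_at_least)
  case base show ?case using tt_paths_1 by auto
next
  case (Suc k)
  then obtain ys where "ys \<in> tt_paths k" by blast
  then have "ys @ [Suc k] \<in> tt_paths (Suc k)" using Suc tt_paths_snoc by blast
  then show ?case by blast
qed

lemma Xn_ge: "vs \<in> tt_paths k \<Longrightarrow> path_weight w vs \<le> Xn k w"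
  unfolding Xn_def using tt_paths_finite by (intro Max_ge) auto

lemma Xn_att: "1 \<le> k \<Longrightarrow> \<exists>vs\<in>tt_paths k. path_weight w vs = Xn k w"
proof -
  assume "1 \<le> k"
  then have "Xn k w \<in> path_weight w ` tt_paths k" unfolding Xn_def
    using tt_paths_finite tt_paths_ne by (intro Max_in) auto
  then show ?thesis by auto
qed

lemma Xn_1: "Xn 1 w = 0" unfolding Xn_def tt_paths_1 by simp

definition bw :: "(nat \<times> nat \<Rightarrow> bool) \<Rightarrow> nat \<Rightarrow> nat \<Rightarrow> nat" where
  "bw w i j = (if w (i, j) then 1 else 0)"

lemma Xn_lower: "1 \<le> i \<Longrightarrow> i \<le> k \<Longrightarrow> Xn i w + bw w i (Suc k) \<le> Xn (Suc k) w"
proof -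
  assume i: "1 \<le> i" "i \<le> k"
  obtain vs where vs: "vs \<in> tt_paths i" "path_weight w vs = Xn i w" using Xn_att i by blast
  have ne: "vs \<noteq> []" and l: "last vs = i" using vs by (auto simp: tt_paths_def)
  have "vs @ [Suc k] \<in> tt_paths (Suc k)" using tt_paths_snoc[of k] i vs by auto
  then have "path_weight w (vs @ [Suc k]) \<le> Xn (Suc k) w" by (rule Xn_ge)
  then show ?thesis using pw_snoc[OF ne] vs l by (simp add: bw_def)
qed

lemma Xn_upper: "1 \<le> k \<Longrightarrow> \<exists>i. 1 \<le> i \<and> i \<le> k \<and> Xn (Suc k) w \<le> Xn i w + bw w i (Suc k)"
proof -
  assume k: "1 \<le> k"
  obtain vs where vs: "vs \<in> tt_paths (Suc k)" "path_weight w vs = Xn (Suc k) w" using Xn_att[of "Suc k" w] by auto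
  then obtain i ys where i: "1 \<le> i" "i \<le> k" and ys: "ys \<in> tt_paths i" and vsd: "vs = ys @ [Suc k]"
    using tt_paths_snoc[OF k] by blast
  have ne: "ys \<noteq> []" and l: "last ys = i" using ys by (auto simp: tt_paths_def)
  have "Xn (Suc k) w = path_weight w ys + bw w i (Suc k)" using vs vsd pw_snoc[OF ne] l by (simp add: bw_def)
  also have "\<dots> \<le> Xn i w + bw w i (Suc k)" using Xn_ge[OF ys] by simp
  finally show ?thesis using i by blast
qed

lemma Xn_mono: assumes "1 \<le> i" "i \<le> j" shows "Xn i w \<le> Xn j w"
  using assms(2)
proof (induction j rule: dec_induct)
  case base then show ?case by simp
next
  case (step j)
  then show ?case using Xn_lower[of j j w] assms(1) by simp
qed

definition incr :: "(nat \<times> nat \<Rightarrow> bool) \<Rightarrow> nat \<Rightarrow> bool" where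
  "incr w k = (\<exists>i\<in>{1..k}. Xn i w = Xn k w \<and> w (i, Suc k))"

definition Lk :: "nat \<Rightarrow> (nat \<times> nat \<Rightarrow> bool) \<Rightarrow> nat" where
  "Lk k w = card {i\<in>{1..k}. Xn i w = Xn k w}"

lemma Xn_step: "1 \<le> k \<Longrightarrow> Xn (Suc k) w = Xn k w + (if incr w k then 1 else 0)"
proof -
  assume k: "1 \<le> k"
  obtain i where i: "1 \<le> i" "i \<le> k" and up: "Xn (Suc k) w \<le> Xn i w + bw w i (Suc k)"
    using Xn_upper[OF k] by blast
  have lowk: "Xn k w \<le> Xn (Suc k) w" using Xn_lower[OF k le_refl, of w] by simp
  have mi: "Xn i w \<le> Xn k w" using Xn_mono i by simp
  show ?thesis
  proof (cases "incr w k")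
    case True
    then obtain j where j: "j \<in> {1..k}" "Xn j w = Xn k w" "w (j, Suc k)" unfolding incr_def by blast
    have "Xn j w + 1 \<le> Xn (Suc k) w" using Xn_lower[of j k w] j by (simp add: bw_def)
    moreover have "Xn (Suc k) w \<le> Xn k w + 1" using up mi by (simp add: bw_def split: if_splits)
    ultimately show ?thesis using True j by simp
  next
    case False
    have "Xn (Suc k) w \<le> Xn k w"
    proof (cases "w (i, Suc k)")
      case True
      then have "Xn i w \<noteq> Xn k w" using False i unfolding incr_def by auto
      then show ?thesis using up mi True by (simp add: bw_def)
    next
      case False
      then show ?thesis using up mi by (simp add: bw_def)
    qed
    then show ?thesis using lowk False by simp
  qed
qed

lemma Lk_step: "1 \<le> k \<Longrightarrow> Lk (Suc k) w = (if incr w k then 1 else Suc (Lk k w))"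
proof -
  assume k: "1 \<le> k"
  show ?thesis
  proof (cases "incr w k")
    case True
    have "{i\<in>{1..Suc k}. Xn i w = Xn (Suc k) w} = {Suc k}"
    proof -
      have "Xn i w \<noteq> Xn (Suc k) w" if "i \<in> {1..k}" for i
        using Xn_mono[of i k w] that Xn_step[OF k, of w] True by auto
      then show ?thesis by (auto simp: le_Suc_eq)
    qed
    then show ?thesis using True by (simp add: Lk_def)
  next
    case False
    have "{i\<in>{1..Suc k}. Xn i w = Xn (Suc k) w} = insert (Suc k) {i\<in>{1..k}. Xn i w = Xn k w}"
      using Xn_step[OF k, of w] False by auto
    then show ?thesis using False by (simp add: Lk_def)
  qed
qed

lemma Lk_range: "1 \<le> k \<Longrightarrow> Lk k w \<in> {1..k}"
proof -
  assume k: "1 \<le> k"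
  have "k \<in> {i\<in>{1..k}. Xn i w = Xn k w}" using k by simp
  then have "card {i\<in>{1..k}. Xn i w = Xn k w} > 0"
    by (subst card_gt_0_iff) auto
  moreover have "card {i\<in>{1..k}. Xn i w = Xn k w} \<le> card {1..k}"
    by (rule card_mono) auto
  ultimately show ?thesis by (simp add: Lk_def)
qed

lemma pw_local: "(\<And>e. e \<in> tt_edges k \<Longrightarrow> w e = w' e) \<Longrightarrow> sorted_wrt (<) vs \<Longrightarrow> set vs \<subseteq> {1..k}
   \<Longrightarrow> path_weight w vs = path_weight w' vs"
proof (induction vs rule: induct_list012)
  case (3 x y zs)
  then have "(x, y) \<in> tt_edges k" by (auto simp: tt_edges_def)
  then show ?case using 3 by auto
qed auto

lemma Xn_local: "(\<And>e. e \<in> tt_edges k \<Longrightarrow> w e = w' e) \<Longrightarrow> Xn k w = Xn k w'"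
proof -
  assume a: "\<And>e. e \<in> tt_edges k \<Longrightarrow> w e = w' e"
  have "path_weight w ` tt_paths k = path_weight w' ` tt_paths k"
    by (intro image_cong refl pw_local[OF a]) (auto simp: tt_paths_def)
  then show ?thesis by (simp add: Xn_def)
qed



definition cedges :: "nat \<Rightarrow> (nat \<times> nat) set" where
  "cedges k = (\<lambda>i. (i, Suc k)) ` {1..k}"

lemma tt_edges_finite: "finite (tt_edges k)"
proof -
  have "tt_edges k \<subseteq> {1..k} \<times> {1..k}" by (auto simp: tt_edges_def)
  then show ?thesis by (rule finite_subset) auto
qed

lemma tt_edges_Suc: "tt_edges (Suc k) = tt_edges k \<union> cedges k"
  by (auto simp: tt_edges_def cedges_def le_Suc_eq)

lemma tt_edges_disj: "tt_edges k \<inter> cedges k = {}"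
  by (auto simp: tt_edges_def cedges_def)

lemma tt_edges_mono: "i \<le> k \<Longrightarrow> tt_edges i \<subseteq> tt_edges k"
  by (auto simp: tt_edges_def)

definition col :: "real \<Rightarrow> nat \<Rightarrow> (nat \<times> nat \<Rightarrow> bool) pmf" where
  "col p k = Pi_pmf (cedges k) False (\<lambda>_. bernoulli_pmf p)"

definition mg :: "nat \<Rightarrow> (nat \<times> nat \<Rightarrow> bool) \<times> (nat \<times> nat \<Rightarrow> bool) \<Rightarrow> (nat \<times> nat \<Rightarrow> bool)" where
  "mg k = (\<lambda>(f,g) x. if x \<in> tt_edges k then f x else g x)"

lemma wp_split: "weight_pmf p (Suc k) = map_pmf (mg k) (pair_pmf (weight_pmf p k) (col p k))"
  unfolding weight_pmf_def col_def mg_def tt_edges_Suc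
  using tt_edges_finite[of k] tt_edges_disj[of k]
  by (intro Pi_pmf_union) (auto simp: cedges_def)

lemma map_pair: "map_pmf H (pair_pmf A B) = bind_pmf A (\<lambda>f. map_pmf (\<lambda>g. H (f,g)) B)"
  by (simp add: pair_pmf_def map_bind_pmf map_pmf_def bind_assoc_pmf bind_return_pmf)

lemma wp_finite: "finite (set_pmf (weight_pmf p k))"
proof -
  have "set_pmf (weight_pmf p k) \<subseteq> PiE_dflt (tt_edges k) False (\<lambda>_. UNIV)"
    using set_Pi_pmf_subset[of "tt_edges k" False "\<lambda>_. bernoulli_pmf p"] tt_edges_finite
    by (auto simp: weight_pmf_def PiE_dflt_def)
  moreover have "finite (PiE_dflt (tt_edges k) False (\<lambda>_. UNIV :: bool set))"
    using tt_edges_finite by auto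
  ultimately show ?thesis by (rule finite_subset)
qed

lemma col_bern:
  assumes p: "0 \<le> p" "p \<le> 1" and S: "S \<subseteq> {1..k}"
  shows "map_pmf (\<lambda>g. \<exists>i\<in>S. g (i, Suc k)) (col p k) = bernoulli_pmf (1 - (1-p) ^ card S)"
proof -
  define S' where "S' = (\<lambda>i. (i, Suc k)) ` S"
  have S'c: "S' \<subseteq> cedges k" using S by (auto simp: S'_def cedges_def)
  have finc: "finite (cedges k)" by (simp add: cedges_def)
  have cS': "card S' = card S" unfolding S'_def by (rule card_image) (auto simp: inj_on_def)
  define B where "B = (\<lambda>e. if e \<in> S' then {False} else (UNIV :: bool set))"
  have eq: "{g. \<not> (\<exists>i\<in>S. g (i, Suc k))} = Pi (cedges k) B"
    using S'c by (auto simp: B_def S'_def Pi_def)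
  have "measure_pmf.prob (col p k) {g. \<not> (\<exists>i\<in>S. g (i, Suc k))}
      = (\<Prod>e\<in>cedges k. measure_pmf.prob (bernoulli_pmf p) (B e))"
    unfolding eq col_def by (rule measure_Pi_pmf_Pi[OF finc])
  also have "\<dots> = (\<Prod>e\<in>cedges k. if e \<in> S' then 1 - p else 1)"
    by (intro prod.cong refl) (simp add: B_def measure_pmf_single p)
  also have "\<dots> = (1 - p) ^ card (cedges k \<inter> S')"
    using finc by (simp add: prod.If_cases)
  also have "cedges k \<inter> S' = S'" using S'c by auto
  finally have F: "measure_pmf.prob (col p k) {g. \<not> (\<exists>i\<in>S. g (i, Suc k))} = (1-p) ^ card S"
    using cS' by simp
  have T: "measure_pmf.prob (col p k) {g. \<exists>i\<in>S. g (i, Suc k)} = 1 - (1-p) ^ card S"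
  proof -
    have "{g. \<exists>i\<in>S. g (i, Suc k)} = UNIV - {g. \<not> (\<exists>i\<in>S. g (i, Suc k))}" by auto
    then show ?thesis using F measure_pmf.prob_compl[of "{g. \<not> (\<exists>i\<in>S. g (i, Suc k))}" "col p k"]
      by simp
  qed
  have q: "0 \<le> 1 - (1-p) ^ card S" "1 - (1-p) ^ card S \<le> 1"
    using p by (auto intro!: power_le_one)
  show ?thesis
  proof (rule pmf_eqI)
    fix b :: bool
    show "pmf (map_pmf (\<lambda>g. \<exists>i\<in>S. g (i, Suc k)) (col p k)) b = pmf (bernoulli_pmf (1 - (1-p) ^ card S)) b"
    proof (cases b)
      case True
      then show ?thesis using T q by (simp add: pmf_map vimage_def)
    next
      case False
      then show ?thesis using F q by (simp add: pmf_map vimage_def)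
    qed
  qed
qed

lemma mg_local:
  assumes "i \<le> k"
  shows "Xn i (mg k (f, g)) = Xn i f"
  using tt_edges_mono[OF assms] by (intro Xn_local) (auto simp: mg_def)

lemma mg_col: "mg k (f, g) (i, Suc k) = g (i, Suc k)"
  by (simp add: mg_def tt_edges_def)

lemma Lk_mg: "Lk k (mg k (f, g)) = Lk k f"
  unfolding Lk_def using mg_local[of _ k f g] by (intro arg_cong[where f=card]) auto

lemma incr_mg: "incr (mg k (f, g)) k = (\<exists>i\<in>{i\<in>{1..k}. Xn i f = Xn k f}. g (i, Suc k))"
  unfolding incr_def using mg_local[of _ k f g] mg_col[of k f g] by auto

definition stepk :: "real \<Rightarrow> nat \<Rightarrow> nat pmf" where
  "stepk p l = map_pmf (\<lambda>b. if b then 1 else Suc l) (bernoulli_pmf (1 - (1-p) ^ l))"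

definition Mk :: "real \<Rightarrow> nat \<Rightarrow> nat pmf" where
  "Mk p k = map_pmf (Lk k) (weight_pmf p k)"

lemma M_step:
  assumes p: "0 \<le> p" "p \<le> 1" and k: "1 \<le> k"
  shows "Mk p (Suc k) = bind_pmf (Mk p k) (stepk p)"
proof -
  have "Mk p (Suc k) = map_pmf (\<lambda>x. Lk (Suc k) (mg k x)) (pair_pmf (weight_pmf p k) (col p k))"
    unfolding Mk_def wp_split by (simp add: pmf.map_comp o_def)
  also have "\<dots> = bind_pmf (weight_pmf p k) (\<lambda>f. map_pmf (\<lambda>g. Lk (Suc k) (mg k (f, g))) (col p k))"
    by (rule map_pair)
  also have "\<dots> = bind_pmf (weight_pmf p k) (\<lambda>f. stepk p (Lk k f))"
  proof (intro bind_pmf_cong refl)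
    fix f
    define S where "S = {i\<in>{1..k}. Xn i f = Xn k f}"
    have cS: "card S = Lk k f" by (simp add: S_def Lk_def)
    have Ssub: "S \<subseteq> {1..k}" by (auto simp: S_def)
    have "map_pmf (\<lambda>g. Lk (Suc k) (mg k (f, g))) (col p k)
        = map_pmf (\<lambda>b. if b then 1 else Suc (Lk k f)) (map_pmf (\<lambda>g. \<exists>i\<in>S. g (i, Suc k)) (col p k))"
      unfolding pmf.map_comp o_def
      by (intro map_pmf_cong refl) (simp only: Lk_step[OF k] incr_mg Lk_mg S_def)
    also have "\<dots> = stepk p (Lk k f)"
      by (simp add: col_bern[OF p Ssub] cS stepk_def)
    finally show "map_pmf (\<lambda>g. Lk (Suc k) (mg k (f, g))) (col p k) = stepk p (Lk k f)" .
  qed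
  also have "\<dots> = bind_pmf (Mk p k) (stepk p)"
    by (simp add: Mk_def bind_map_pmf)
  finally show ?thesis .
qed

definition ex :: "real \<Rightarrow> nat \<Rightarrow> real" where
  "ex p k = measure_pmf.expectation (weight_pmf p k) (\<lambda>w. real (Xn k w))"

lemma ex_step:
  assumes k: "1 \<le> k"
  shows "ex p (Suc k) = ex p k + pmf (Mk p (Suc k)) 1"
proof -
  have pt: "real (Xn (Suc k) w) = real (Xn k w) + (if Lk (Suc k) w = 1 then 1 else 0)" for w
    using Xn_step[OF k, of w] Lk_step[OF k, of w] Lk_range[OF k, of w] by auto
  have "ex p (Suc k) = measure_pmf.expectation (weight_pmf p (Suc k)) (\<lambda>w. real (Xn k w))
      + measure_pmf.expectation (weight_pmf p (Suc k)) (\<lambda>w. if Lk (Suc k) w = 1 then 1 else 0)"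
    unfolding ex_def pt
    by (rule Bochner_Integration.integral_add) (auto intro!: integrable_measure_pmf_finite wp_finite)
  also have "measure_pmf.expectation (weight_pmf p (Suc k)) (\<lambda>w. real (Xn k w)) = ex p k"
  proof -
    have "measure_pmf.expectation (weight_pmf p (Suc k)) (\<lambda>w. real (Xn k w))
        = measure_pmf.expectation (pair_pmf (weight_pmf p k) (col p k)) (\<lambda>x. real (Xn k (mg k x)))"
      unfolding wp_split by simp
    also have "\<dots> = measure_pmf.expectation (pair_pmf (weight_pmf p k) (col p k)) (\<lambda>x. real (Xn k (fst x)))"
      by (intro Bochner_Integration.integral_cong refl) (auto simp: mg_local)
    also have "\<dots> = measure_pmf.expectation (map_pmf fst (pair_pmf (weight_pmf p k) (col p k))) (\<lambda>f. real (Xn k f))"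
      by simp
    also have "\<dots> = ex p k" by (simp add: map_fst_pair_pmf ex_def)
    finally show ?thesis .
  qed
  also have "measure_pmf.expectation (weight_pmf p (Suc k)) (\<lambda>w. if Lk (Suc k) w = 1 then 1 else 0)
      = measure_pmf.expectation (Mk p (Suc k)) (\<lambda>l. if l = 1 then 1 else 0 :: real)"
    by (simp add: Mk_def)
  also have "\<dots> = pmf (Mk p (Suc k)) 1"
    by (subst integral_measure_pmf_real[where A="{1}"]) (auto split: if_splits)
  finally show ?thesis .
qed

lemma ex_1: "ex p 1 = 0"
  unfolding ex_def Xn_1 by simp

lemma Mk_support: "1 \<le> k \<Longrightarrow> l \<in> set_pmf (Mk p k) \<Longrightarrow> l \<in> {1..k}"
  using Lk_range by (auto simp: Mk_def)

lemma Mk_1: "Mk p 1 = return_pmf 1"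
proof -
  have "Mk p 1 = map_pmf (\<lambda>_. 1) (weight_pmf p 1)"
    unfolding Mk_def using Lk_range[of 1] by (intro map_pmf_cong refl) auto
  then show ?thesis by simp
qed

lemma pmf_stepk:
  assumes p: "0 \<le> p" "p \<le> 1" and l: "1 \<le> l"
  shows "pmf (stepk p l) x = (if x = 1 then 1 - (1-p)^l else if x = Suc l then (1-p)^l else 0)"
proof -
  have q: "0 \<le> 1 - (1-p) ^ l" "1 - (1-p) ^ l \<le> 1"
    using p by (auto intro!: power_le_one)
  have pre: "(\<lambda>b. if b then 1 else Suc l) -` {x} = (if x = 1 then {True} else if x = Suc l then {False} else {})"
  proof (rule set_eqI)
    fix b :: bool
    show "b \<in> (\<lambda>b. if b then 1 else Suc l) -` {x} \<longleftrightarrow> b \<in> (if x = 1 then {True} else if x = Suc l then {False} else {})"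
      using l by (cases b) auto
  qed
  show ?thesis using q l unfolding stepk_def pmf_map pre by (auto simp: measure_pmf_single)
qed



definition bb :: "real \<Rightarrow> nat \<Rightarrow> real" where
  "bb p t = (1 - p) ^ ((t + 1) choose 2)"

definition uu :: "real \<Rightarrow> nat \<Rightarrow> real" where
  "uu p t = (\<Sum>m\<le>t. hcoef p m)"

lemma Bp_nth: "fps_nth (Bp p) t = bb p t" by (simp add: Bp_def bb_def)

lemma bb_0: "bb p 0 = 1" by (simp add: bb_def numeral_2_eq_2)

lemma hcoef_0: "hcoef p 0 = 1" by (simp add: hcoef_def Bp_nth bb_0)

lemma uu_0: "uu p 0 = 1" by (simp add: uu_def hcoef_0)

lemma bb_step: "1 \<le> l \<Longrightarrow> (1-p)^l * bb p (l-1) = bb p l"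
proof -
  assume "1 \<le> l"
  then obtain m where m: "l = Suc m" by (cases l) auto
  have "(Suc (Suc m) choose 2) = Suc m + (Suc m choose 2)"
    by (simp add: numeral_2_eq_2)
  then show ?thesis unfolding m bb_def by (simp add: power_add)
qed

lemma R: "(\<Sum>i=0..k. bb p i * uu p (k - i)) = 1"
proof -
  define U where "U = inverse (Bp p) * Abs_fps (\<lambda>_. 1::real)"
  have Un: "fps_nth U t = uu p t" for t
    unfolding U_def fps_mult_nth uu_def hcoef_def by (simp add: atLeast0AtMost)
  have "Bp p * U = (Bp p * inverse (Bp p)) * Abs_fps (\<lambda>_. 1::real)"
    by (simp add: U_def mult.assoc)
  also have "Bp p * inverse (Bp p) = 1"
    by (rule inverse_mult_eq_1') (simp add: Bp_nth bb_0)
  finally have "fps_nth (Bp p * U) k = 1" by simp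
  then show ?thesis unfolding fps_mult_nth Un Bp_nth .
qed

lemma sumA: "(\<Sum>l=1..Suc k. uu p (Suc k - l) * bb p (l - 1)) = 1"
proof -
  have "(\<Sum>l=1..Suc k. uu p (Suc k - l) * bb p (l - 1)) = (\<Sum>i=0..k. uu p (k - i) * bb p i)"
    unfolding One_nat_def sum.shift_bounds_cl_Suc_ivl by simp
  also have "\<dots> = 1" using R[of p k] by (simp add: mult.commute)
  finally show ?thesis .
qed

lemma sumB: "(\<Sum>l=1..k. uu p (k - l) * bb p l) = 1 - uu p k"
proof -
  have "1 = (\<Sum>i=0..k. bb p i * uu p (k - i))" using R by simp
  also have "\<dots> = bb p 0 * uu p (k - 0) + (\<Sum>i=Suc 0..k. bb p i * uu p (k - i))"
    by (rule sum.atLeast_Suc_atMost) simp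
  finally show ?thesis by (simp add: bb_0 mult.commute)
qed

lemma renewal: "1 \<le> k \<Longrightarrow> (\<Sum>l=1..k. (1 - (1-p)^l) * (uu p (k - l) * bb p (l - 1))) = uu p k"
proof -
  assume k: "1 \<le> k"
  then obtain k' where k': "k = Suc k'" by (cases k) auto
  have "(\<Sum>l=1..k. (1 - (1-p)^l) * (uu p (k - l) * bb p (l - 1)))
      = (\<Sum>l=1..k. uu p (k - l) * bb p (l - 1)) - (\<Sum>l=1..k. uu p (k - l) * bb p l)"
    by (subst sum_subtractf[symmetric]) (intro sum.cong refl, simp add: algebra_simps bb_step[symmetric])
  also have "\<dots> = uu p k" using sumA[of p k'] sumB[of p k] k' by simp
  finally show ?thesis .
qed

lemma Mk_formula:
  assumes p: "0 \<le> p" "p \<le> 1" and k: "1 \<le> k"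
  shows "pmf (Mk p k) x = (if 1 \<le> x \<and> x \<le> k then uu p (k - x) * bb p (x - 1) else 0)"
  using k
proof (induction k arbitrary: x rule: nat_induct_at_least)
  case base
  show ?case unfolding Mk_1 by (auto simp: uu_0 bb_0 indicator_def)
next
  case (Suc k)
  have "pmf (Mk p (Suc k)) x = (\<integral>l. pmf (stepk p l) x \<partial>measure_pmf (Mk p k))"
    by (simp add: M_step[OF p Suc.hyps] pmf_bind)
  also have "\<dots> = (\<Sum>l\<in>{1..k}. pmf (stepk p l) x * pmf (Mk p k) l)"
    by (rule integral_measure_pmf_real) (use Mk_support[OF Suc.hyps] in auto)
  also have "\<dots> = (\<Sum>l\<in>{1..k}. (if x = 1 then 1 - (1-p)^l else if x = Suc l then (1-p)^l else 0)
                    * (uu p (k - l) * bb p (l - 1)))"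
    by (intro sum.cong refl) (simp add: pmf_stepk[OF p] Suc.IH)
  also have "\<dots> = (if 1 \<le> x \<and> x \<le> Suc k then uu p (Suc k - x) * bb p (x - 1) else 0)"
  proof (cases "x = 1")
    case True
    then show ?thesis using renewal[OF Suc.hyps, of p] by (simp add: bb_0)
  next
    case False
    then have "(\<Sum>l\<in>{1..k}. (if x = 1 then 1 - (1-p)^l else if x = Suc l then (1-p)^l else 0)
                    * (uu p (k - l) * bb p (l - 1)))
        = (\<Sum>l\<in>{1..k}. if x - 1 = l then (1-p)^l * (uu p (k - l) * bb p (l - 1)) else 0)"
      by (intro sum.cong refl) auto
    also have "\<dots> = (if x - 1 \<in> {1..k} then (1-p)^(x-1) * (uu p (k - (x-1)) * bb p (x - 1 - 1)) else 0)"
      by (simp only: sum.delta' finite_atLeastAtMost)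
    also have "\<dots> = (if 1 \<le> x \<and> x \<le> Suc k then uu p (Suc k - x) * bb p (x - 1) else 0)"
    proof (cases "x - 1 \<in> {1..k}")
      case True
      then have "(1-p)^(x-1) * bb p (x - 1 - 1) = bb p (x - 1)" by (intro bb_step) auto
      then show ?thesis using True False by (auto simp: Suc_diff_le)
    next
      case F2: False
      then show ?thesis using False by auto
    qed
    finally show ?thesis .
  qed
  finally show ?case .
qed

lemma ex_formula:
  assumes p: "0 \<le> p" "p \<le> 1" and n: "1 \<le> n"
  shows "ex p n = (\<Sum>k\<in>{1..<n}. uu p k)"
  using n
proof (induction n rule: nat_induct_at_least)
  case base
  show ?case unfolding ex_1 by simp
next
  case (Suc n)
  have "pmf (Mk p (Suc n)) 1 = uu p n" using Mk_formula[OF p, of "Suc n" 1] by (simp add: bb_0)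
  then show ?case using ex_step[OF Suc.hyps, of p] Suc by simp
qed

lemma gfun_formula:
  assumes p: "0 \<le> p" "p \<le> 1" and n: "1 \<le> n"
  shows "gfun p n = (\<Sum>m<n. uu p m)"
proof -
  have "gfun p n = 1 + ex p n" by (simp add: gfun_def ex_def)
  also have "\<dots> = uu p 0 + (\<Sum>k\<in>{1..<n}. uu p k)" by (simp add: ex_formula[OF p n] uu_0)
  also have "\<dots> = (\<Sum>m<n. uu p m)"
  proof -
    have "{..<n} = insert 0 {1..<n}" using n by auto
    then show ?thesis by simp
  qed
  finally show ?thesis .
qed

lemma sum_uu: "(\<Sum>m<n. uu p m) = (\<Sum>m<n. real (n - m) * hcoef p m)"
proof (induction n)
  case 0 then show ?case by simp
next
  case (Suc n)
  have "(\<Sum>m<Suc n. real (Suc n - m) * hcoef p m) = (\<Sum>m<Suc n. real (n - m) * hcoef p m + hcoef p m)"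
    by (intro sum.cong refl) (simp add: Suc_diff_le of_nat_diff algebra_simps)
  also have "\<dots> = (\<Sum>m<Suc n. real (n - m) * hcoef p m) + (\<Sum>m<Suc n. hcoef p m)"
    by (rule sum.distrib)
  also have "(\<Sum>m<Suc n. real (n - m) * hcoef p m) = (\<Sum>m<n. real (n - m) * hcoef p m)"
    by (subst sum.lessThan_Suc) simp
  also have "(\<Sum>m<Suc n. hcoef p m) = uu p n"
    by (simp add: uu_def lessThan_Suc_atMost)
  finally show ?case using Suc by simp
qed



definition SS :: "real \<Rightarrow> nat \<Rightarrow> nat \<Rightarrow> real" where
  "SS p n j = (\<Sum>a\<in>comps n j. comp_weight p a)"

definition cc :: "real \<Rightarrow> nat \<Rightarrow> real" where
  "cc p n = (\<Sum>j\<le>n. (-1) ^ j * SS p n j)"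

lemma comp_weight_Nil: "comp_weight p [] = 1" by (simp add: comp_weight_def)

lemma comp_weight_Cons: "comp_weight p (a # as) = bb p a * comp_weight p as"
proof -
  have "(\<Sum>i<length (a # as). ((a # as) ! i + 1) choose 2) = ((a + 1) choose 2) + (\<Sum>i<length as. (as ! i + 1) choose 2)"
    by (simp only: length_Cons sum.lessThan_Suc_shift nth_Cons_0 nth_Cons_Suc)
  then show ?thesis by (simp add: comp_weight_def bb_def power_add)
qed

lemma comps_finite: "finite (comps n j)"
proof -
  have "comps n j \<subseteq> {xs. set xs \<subseteq> {0..n} \<and> length xs = j}"
    by (auto simp: comps_def member_le_sum_list)
  moreover have "finite {xs. set xs \<subseteq> {0..n} \<and> length xs = j}"
    by (rule finite_lists_length_eq) simp
  ultimately show ?thesis by (rule finite_subset)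
qed

lemma length_le_sum: "\<forall>a\<in>set as. 0 < (a::nat) \<Longrightarrow> length as \<le> sum_list as"
  by (induction as) auto

lemma comps_0: "comps n 0 = (if n = 0 then {[]} else {})"
  by (auto simp: comps_def)

lemma comps_big: "n < j \<Longrightarrow> comps n j = {}"
  using length_le_sum by (fastforce simp: comps_def)

lemma comps_Suc: "comps n (Suc j) = (\<Union>a\<in>{1..n}. (\<lambda>as. a # as) ` comps (n - a) j)"
proof (rule set_eqI)
  fix xs
  show "xs \<in> comps n (Suc j) \<longleftrightarrow> xs \<in> (\<Union>a\<in>{1..n}. (\<lambda>as. a # as) ` comps (n - a) j)"
  proof
    assume "xs \<in> comps n (Suc j)"
    then obtain a as where xs: "xs = a # as" and l: "length as = j" and pos: "0 < a" "\<forall>b\<in>set as. 0 < b"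
      and s: "a + sum_list as = n"
      by (cases xs) (auto simp: comps_def)
    then have "as \<in> comps (n - a) j" "a \<in> {1..n}" by (auto simp: comps_def)
    then show "xs \<in> (\<Union>a\<in>{1..n}. (\<lambda>as. a # as) ` comps (n - a) j)" using xs by blast
  next
    assume "xs \<in> (\<Union>a\<in>{1..n}. (\<lambda>as. a # as) ` comps (n - a) j)"
    then obtain a as where a: "a \<in> {1..n}" and as: "as \<in> comps (n - a) j" and xs: "xs = a # as" by blast
    then show "xs \<in> comps n (Suc j)" by (auto simp: comps_def)
  qed
qed

lemma SS_0: "SS p n 0 = (if n = 0 then 1 else 0)"
  by (simp add: SS_def comps_0 comp_weight_Nil)

lemma SS_big: "n < j \<Longrightarrow> SS p n j = 0"
  by (simp add: SS_def comps_big)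

lemma SS_Suc: "SS p n (Suc j) = (\<Sum>a\<in>{1..n}. bb p a * SS p (n - a) j)"
proof -
  have "SS p n (Suc j) = (\<Sum>a\<in>{1..n}. \<Sum>xs\<in>(\<lambda>as. a # as) ` comps (n - a) j. comp_weight p xs)"
    unfolding SS_def comps_Suc
    by (rule sum.UNION_disjoint) (auto simp: comps_finite)
  also have "\<dots> = (\<Sum>a\<in>{1..n}. \<Sum>as\<in>comps (n - a) j. comp_weight p (a # as))"
  proof (rule sum.cong[OF refl])
    fix a
    show "(\<Sum>xs\<in>(\<lambda>as. a # as) ` comps (n - a) j. comp_weight p xs) = (\<Sum>as\<in>comps (n - a) j. comp_weight p (a # as))"
      by (subst sum.reindex) (auto simp: inj_on_def)
  qed
  also have "\<dots> = (\<Sum>a\<in>{1..n}. bb p a * SS p (n - a) j)"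
    by (simp add: comp_weight_Cons SS_def sum_distrib_left)
  finally show ?thesis .
qed

lemma cc_0: "cc p 0 = 1" by (simp add: cc_def SS_0)

lemma cc_rec: "1 \<le> n \<Longrightarrow> cc p n = - (\<Sum>a\<in>{1..n}. bb p a * cc p (n - a))"
proof -
  assume n: "1 \<le> n"
  then obtain n' where n': "n = Suc n'" by (cases n) auto
  have "cc p n = (\<Sum>j\<le>Suc n'. (-1) ^ j * SS p n j)" by (simp add: cc_def n')
  also have "\<dots> = (-1) ^ 0 * SS p n 0 + (\<Sum>j<Suc n'. (-1) ^ Suc j * SS p n (Suc j))"
    by (subst sum.atMost_Suc_shift) (simp add: lessThan_Suc_atMost)
  also have "\<dots> = (\<Sum>j<n. (-1) ^ Suc j * SS p n (Suc j))"
    using n' by (simp add: SS_0)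
  also have "\<dots> = - (\<Sum>a\<in>{1..n}. bb p a * (\<Sum>j<n. (-1) ^ j * SS p (n - a) j))"
    by (simp add: SS_Suc sum_distrib_left sum_negf[symmetric] sum.swap[of _ "{..<n}"] algebra_simps)
  also have "\<dots> = - (\<Sum>a\<in>{1..n}. bb p a * cc p (n - a))"
  proof -
    have "(\<Sum>j<n. (-1) ^ j * SS p (n - a) j) = cc p (n - a)" if a: "a \<in> {1..n}" for a
      unfolding cc_def
      by (rule sum.mono_neutral_right) (use a in \<open>auto simp: SS_big\<close>)
    then show ?thesis by simp
  qed
  finally show ?thesis .
qed

lemma cc_inverse: "inverse (Bp p) = Abs_fps (cc p)"
proof (rule fps_inverse_unique)
  show "Bp p * Abs_fps (cc p) = 1"
  proof (rule fps_ext)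
    fix n
    show "fps_nth (Bp p * Abs_fps (cc p)) n = fps_nth 1 n"
    proof (cases "n = 0")
      case True then show ?thesis by (simp add: Bp_nth bb_0 cc_0)
    next
      case False
      have "fps_nth (Bp p * Abs_fps (cc p)) n = (\<Sum>i=0..n. bb p i * cc p (n - i))"
        by (simp add: fps_mult_nth Bp_nth)
      also have "\<dots> = bb p 0 * cc p (n - 0) + (\<Sum>i=Suc 0..n. bb p i * cc p (n - i))"
        by (rule sum.atLeast_Suc_atMost) simp
      also have "\<dots> = 0" using cc_rec[of n p] False by (simp add: bb_0)
      finally show ?thesis using False by simp
    qed
  qed
qed

lemma hcoef_cc: "hcoef p n = cc p n"
  by (simp add: hcoef_def cc_inverse)

lemma partA: "1 \<le> n \<Longrightarrow> hcoef p n = (\<Sum>j=1..n. (-1) ^ j * (\<Sum>a\<in>comps n j. comp_weight p a))"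
proof -
  assume n: "1 \<le> n"
  have "hcoef p n = (\<Sum>j=0..n. (-1) ^ j * SS p n j)" by (simp add: hcoef_cc cc_def atMost_atLeast0)
  also have "\<dots> = (-1) ^ 0 * SS p n 0 + (\<Sum>j=Suc 0..n. (-1) ^ j * SS p n j)"
    by (rule sum.atLeast_Suc_atMost) simp
  also have "\<dots> = (\<Sum>j=1..n. (-1) ^ j * SS p n j)" using n by (simp add: SS_0)
  finally show ?thesis by (simp add: SS_def)
qed

lemma all_comps_eq: "all_comps m = (\<Union>j\<in>{..m}. comps m j)"
proof -
  have "length as \<le> m" if "as \<in> all_comps m" for as
    using that length_le_sum by (auto simp: all_comps_def)
  then show ?thesis by (auto simp: all_comps_def comps_def)
qed

lemma partAll: "(\<Sum>a\<in>all_comps m. (-1) ^ length a * comp_weight p a) = hcoef p m"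
proof -
  have "(\<Sum>a\<in>all_comps m. (-1) ^ length a * comp_weight p a)
      = (\<Sum>j\<in>{..m}. \<Sum>a\<in>comps m j. (-1) ^ length a * comp_weight p a)"
    unfolding all_comps_eq
    by (rule sum.UNION_disjoint) (simp_all add: comps_finite, auto simp: comps_def)
  also have "\<dots> = (\<Sum>j\<in>{..m}. (-1) ^ j * SS p m j)"
    by (intro sum.cong refl) (simp add: SS_def sum_distrib_left comps_def)
  finally show ?thesis by (simp add: hcoef_cc cc_def)
qed


theorem corollary4:
  fixes p :: real
  assumes "0 < p" and "p < 1"
  shows "(\<forall>n\<ge>1. hcoef p n = (\<Sum>j=1..n. (-1) ^ j * (\<Sum>a\<in>comps n j. comp_weight p a)))
    \<and> (\<forall>n\<ge>1.
         gfun p n = (\<Sum>m<n. real (n - m) * hcoef p m)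
       \<and> gfun p n = (\<Sum>m<n. real (n - m) *
            (\<Sum>a\<in>all_comps m. (-1) ^ length a * comp_weight p a))
       \<and> gfun p n = (\<Sum>m<n. \<Sum>j\<le>m. \<Sum>k\<le>j. (-1) ^ k * (\<Sum>a\<in>comps j k. comp_weight p a)))"
proof (intro conjI allI impI)
  fix n :: nat assume "n \<ge> 1"
  then show "hcoef p n = (\<Sum>j=1..n. (-1) ^ j * (\<Sum>a\<in>comps n j. comp_weight p a))" by (rule partA)
next
  fix n :: nat assume n: "n \<ge> 1"
  have p: "0 \<le> p" "p \<le> 1" using assms by auto
  have g: "gfun p n = (\<Sum>m<n. uu p m)" by (rule gfun_formula[OF p n])
  show "gfun p n = (\<Sum>m<n. real (n - m) * hcoef p m)" using g sum_uu by simp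
  then show "gfun p n = (\<Sum>m<n. real (n - m) *
            (\<Sum>a\<in>all_comps m. (-1) ^ length a * comp_weight p a))" by (simp add: partAll)
  show "gfun p n = (\<Sum>m<n. \<Sum>j\<le>m. \<Sum>k\<le>j. (-1) ^ k * (\<Sum>a\<in>comps j k. comp_weight p a))"
    using g by (simp add: uu_def hcoef_cc cc_def SS_def)
qed

end
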